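(* Consider Algorithm ProxSVRG (described in the context) with $b=1$, $\eta=1/(3Ln)$, $m=n$, and $T$ a multiple of $m$. Then the output $x_a$ satisfies $$\mathbb E\big[\|\mathcal G_\eta(x_a)\|^2\big]\le \frac{18Ln^2}{3n-2}\cdot\frac{F(x^0)-F(x^* )}{T},$$ where $x^*$ is an optimal solution of $\min_x F(x)$.
   Context: Setting: Let $n,d\ge 1$ be integers and $[n]=\{1,\dots,n\}$. Let $f_1,\dots,f_n:\mathbb R^d\to\mathbb R$ be differentiable (possibly nonconvex) functions, each $L$-smooth for some $L>0$, i.e. $\|\nabla f_i(x)-\nabla f_i(y)\|\le L\|x-y\|$ for all $x,y\in\mathbb R^d$ and $i\in[n]$. Let $f=\frac1n\sum_{i=1}^n f_i$. Let $h:\mathbb R^d\to\mathbb R\cup\{+\infty\}$ be proper, lower semicontinuous and convex, with closed domain. Let $F=f+h$, and let $x^*$ be a global minimizer of $F$ on $\mathbb R^d$ (assumed to exist). For $\eta>0$, $\mathrm{prox}_{\eta h}(x):=\arg\min_{y\in\mathbb R^d}\big(h(y)+\frac1{2\eta}\|y-x\|^2\big)$, and the gradient mapping is $\mathcal G_\eta(x):=\frac1\eta\big[x-\mathrm{prox}_{\eta h}(x-\eta\nabla f(x))\big]$. Algorithm ProxSVRG$(x^0,T,m,b,\eta)$: Given $x^0\in\mathbb R^d$, positive integers $T,m,b$ and $\eta>0$, let $S=\lceil T/m\rceil$ and set $\tilde x^0=x^0_m=x^0$. For $s=0,\dots,S-1$: set $x^{s+1}_0=x^s_m$ and $g^{s+1}=\frac1n\sum_{i=1}^n\nabla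 f_i(\tilde x^s)$; for $t=0,\dots,m-1$: draw a multiset $I_t$ of $b$ indices, each drawn independently and uniformly at random from $[n]$ (with replacement, independently of all previous draws), set $v^{s+1}_t=\frac1b\sum_{i\in I_t}\big(\nabla f_i(x^{s+1}_t)-\nabla f_i(\tilde x^s)\big)+g^{s+1}$ and $x^{s+1}_{t+1}=\mathrm{prox}_{\eta h}(x^{s+1}_t-\eta v^{s+1}_t)$; after the inner loop set $\tilde x^{s+1}=x^{s+1}_m$. The output $x_a$ is chosen uniformly at random from $\{x^{s+1}_t: 0\le t\le m-1,\ 0\le s\le S-1\}$. Expectations are over all randomness of the algorithm. *)

theory Defs
  imports "HOL-Analysis.Analysis" "HOL-Probability.Probability"
begin

definition ext_proper :: "('a \<Rightarrow> ereal) \<Rightarrow> bool" where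
  "ext_proper h \<longleftrightarrow> (\<forall>x. h x \<noteq> -\<infinity>) \<and> (\<exists>x. h x \<noteq> \<infinity>)"

definition ext_lsc :: "('a::topological_space \<Rightarrow> ereal) \<Rightarrow> bool" where
  "ext_lsc h \<longleftrightarrow> (\<forall>c::real. closed {x. h x \<le> ereal c})"

definition ext_convex :: "('a::real_vector \<Rightarrow> ereal) \<Rightarrow> bool" where
  "ext_convex h \<longleftrightarrow> (\<forall>x y u. 0 \<le> u \<and> u \<le> 1 \<longrightarrow>
      h ((1 - u) *\<^sub>R x + u *\<^sub>R y) \<le> ereal (1 - u) * h x + ereal u * h y)"

definition ext_dom :: "('a \<Rightarrow> ereal) \<Rightarrow> 'a set" where
  "ext_dom h = {x. h x \<noteq> \<infinity>}"

definition prox :: "('a::real_normed_vector \<Rightarrow> ereal) \<Rightarrow> real \<Rightarrow> 'a \<Rightarrow> 'a" where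
  "prox h eta x = (THE y. \<forall>z. h y + ereal ((norm (y - x))\<^sup>2 / (2 * eta))
                             \<le> h z + ereal ((norm (z - x))\<^sup>2 / (2 * eta)))"

definition avg_grad :: "nat \<Rightarrow> (nat \<Rightarrow> 'a \<Rightarrow> 'a::real_vector) \<Rightarrow> 'a \<Rightarrow> 'a" where
  "avg_grad n gf x = (1 / real n) *\<^sub>R (\<Sum>i<n. gf i x)"

definition grad_mapping ::
  "nat \<Rightarrow> (nat \<Rightarrow> 'a \<Rightarrow> 'a::real_normed_vector) \<Rightarrow> ('a \<Rightarrow> ereal) \<Rightarrow> real \<Rightarrow> 'a \<Rightarrow> 'a" where
  "grad_mapping n gf h eta x = (1 / eta) *\<^sub>R (x - prox h eta (x - eta *\<^sub>R avg_grad n gf x))"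

text \<open>Iterates of ProxSVRG, indexed globally: step k = s*m + t (s = epoch, t = inner step).
  The state is (current iterate x, current snapshot x~). The random choices are
  w (k, j) for k the global inner step and j < b the position in the minibatch I_t.
  The first component of svrg_state ... k is x^{s+1}_t for k = s*m + t.\<close>
fun svrg_state ::
  "nat \<Rightarrow> (nat \<Rightarrow> 'a \<Rightarrow> 'a::real_normed_vector) \<Rightarrow> ('a \<Rightarrow> ereal) \<Rightarrow> 'a \<Rightarrow> nat \<Rightarrow> nat \<Rightarrow> real
     \<Rightarrow> (nat \<times> nat \<Rightarrow> nat) \<Rightarrow> nat \<Rightarrow> 'a \<times> 'a" where
  "svrg_state n gf h x0 m b eta w 0 = (x0, x0)"
| "svrg_state n gf h x0 m b eta w (Suc k) =
     (let (x, xs) = svrg_state n gf h x0 m b eta w k;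
          snap = (if k mod m = 0 then x else xs);
          v = (1 / real b) *\<^sub>R (\<Sum>j<b. gf (w (k, j)) x - gf (w (k, j)) snap)
              + avg_grad n gf snap
      in (prox h eta (x - eta *\<^sub>R v), snap))"

definition svrg_iter where
  "svrg_iter n gf h x0 m b eta w k = fst (svrg_state n gf h x0 m b eta w k)"

definition svrg_steps :: "nat \<Rightarrow> nat \<Rightarrow> nat" where
  "svrg_steps T m = nat \<lceil>real T / real m\<rceil> * m"

text \<open>Sample space of the index draws: uniform over all maps {0..<S*m} x {0..<b} -> {0..<n}
  (i.i.d. uniform draws with replacement), together with the uniform output index.\<close>
definition svrg_space :: "nat \<Rightarrow> nat \<Rightarrow> nat \<Rightarrow> nat \<Rightarrow> ((nat \<times> nat \<Rightarrow> nat) \<times> nat) pmf" where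
  "svrg_space n T m b = pmf_of_set
     ((PiE ({0..<svrg_steps T m} \<times> {0..<b}) (\<lambda>_. {0..<n})) \<times> {0..<svrg_steps T m})"

definition svrg_expected_gm ::
  "nat \<Rightarrow> (nat \<Rightarrow> 'a \<Rightarrow> 'a::real_normed_vector) \<Rightarrow> ('a \<Rightarrow> ereal) \<Rightarrow> 'a \<Rightarrow> nat \<Rightarrow> nat \<Rightarrow> nat \<Rightarrow> real \<Rightarrow> real" where
  "svrg_expected_gm n gf h x0 T m b eta =
     measure_pmf.expectation (svrg_space n T m b)
       (\<lambda>(w, a). (norm (grad_mapping n gf h eta (svrg_iter n gf h x0 m b eta w a)))\<^sup>2)"

end

theory Submission
  imports Defs
begin

lemma lsc_min_compact:
  fixes g :: "'a::metric_space \<Rightarrow> ereal"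
  assumes cl: "\<And>c::real. closed {x. g x \<le> ereal c}" and K: "compact K" "K \<noteq> {}"
  shows "\<exists>y\<in>K. \<forall>z\<in>K. g y \<le> g z"
proof -
  define c where "c = (INF z\<in>K. g z)"
  define Fm where "Fm = (\<lambda>r. {x. g x \<le> ereal r}) ` {r. c < ereal r}"
  have "K \<inter> \<Inter>Fm \<noteq> {}"
  proof (rule compact_imp_fip[OF K(1)])
    show "closed T" if "T \<in> Fm" for T using that cl unfolding Fm_def by auto
  next
    fix F' assume F': "finite F'" "F' \<subseteq> Fm"
    then obtain R where R: "R \<subseteq> {r. c < ereal r}" "finite R" "F' = (\<lambda>r. {x. g x \<le> ereal r}) ` R"
      unfolding Fm_def by (metis finite_subset_image)
    show "K \<inter> \<Inter>F' \<noteq> {}"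
    proof (cases "R = {}")
      case True then show ?thesis using R K by auto
    next
      case False
      have "Min R \<in> R" using R False by simp
      then have "c < ereal (Min R)" using R by auto
      then obtain z where z: "z \<in> K" "g z < ereal (Min R)" unfolding c_def by (auto simp: INF_less_iff)
      have "z \<in> K \<inter> \<Inter>F'"
      proof -
        have "g z \<le> ereal r" if "r \<in> R" for r
          using z(2) Min_le[OF R(2) that] by (metis ereal_less_eq(3) less_imp_le order_trans)
        then show ?thesis using z R by auto
      qed
      then show ?thesis by blast
    qed
  qed
  then obtain y where y: "y \<in> K" "\<And>r. c < ereal r \<Longrightarrow> g y \<le> ereal r" unfolding Fm_def by auto
  have "g y \<le> c"
  proof (rule ccontr)
    assume "\<not> g y \<le> c"
    then have "c < g y" by auto
    then obtain r where "c < ereal r" "ereal r < g y" using ereal_dense2 by blast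
    with y show False by force
  qed
  moreover have "\<forall>z\<in>K. c \<le> g z" unfolding c_def by (auto intro: INF_lower)
  ultimately show ?thesis using y(1) by (meson order_trans)
qed

lemma lsc_add_cont:
  fixes h :: "'a::metric_space \<Rightarrow> ereal" and q :: "'a \<Rightarrow> real"
  assumes cl: "\<And>c::real. closed {x. h x \<le> ereal c}" and q: "continuous_on UNIV q"
  shows "closed {x. h x + ereal (q x) \<le> ereal c}"
proof -
  have eq: "{x. h x + ereal (q x) \<le> ereal c} = (\<Inter>r. {x. h x \<le> ereal r} \<union> {x. q x \<le> c - r})"
  proof (intro set_eqI iffI)
    fix x assume "x \<in> {x. h x + ereal (q x) \<le> ereal c}"
    then have x: "h x + ereal (q x) \<le> ereal c" by simp
    show "x \<in> (\<Inter>r. {x. h x \<le> ereal r} \<union> {x. q x \<le> c - r})"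
    proof -
      have "h x \<le> ereal r \<or> q x \<le> c - r" for r
      proof (cases "h x \<le> ereal r")
        case False
        then have "ereal r < h x" by simp
        with x show ?thesis by (cases "h x") auto
      qed simp
      then show ?thesis by blast
    qed
  next
    fix x assume x: "x \<in> (\<Inter>r. {x. h x \<le> ereal r} \<union> {x. q x \<le> c - r})"
    show "x \<in> {x. h x + ereal (q x) \<le> ereal c}"
    proof (rule ccontr)
      assume "x \<notin> {x. h x + ereal (q x) \<le> ereal c}"
      then have "ereal (c - q x) < h x" by (cases "h x") auto
      then obtain r where r: "ereal (c - q x) < ereal r" "ereal r < h x" using ereal_dense2 by blast
      from x have "h x \<le> ereal r \<or> q x \<le> c - r" by blast
      with r show False by auto
    qed
  qed
  show ?thesis unfolding eq
    by (intro closed_INT ballI closed_Un cl closed_Collect_le q continuous_on_const) 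
qed

lemma h_lower_linear:
  fixes h :: "'a::euclidean_space \<Rightarrow> ereal"
  assumes hp: "ext_proper h" and hl: "ext_lsc h" and hc: "ext_convex h"
  shows "\<exists>p mr C. h p \<noteq> \<infinity> \<and> C \<ge> 0 \<and> (\<forall>y. ereal (mr - C * norm (y - p)) \<le> h y)"
proof -
  obtain p where p: "h p \<noteq> \<infinity>" using hp unfolding ext_proper_def by auto
  have pm: "h p \<noteq> -\<infinity>" using hp unfolding ext_proper_def by auto
  define hpr where "hpr = real_of_ereal (h p)"
  have hpr: "h p = ereal hpr" using p pm unfolding hpr_def by (cases "h p") auto
  obtain y0 where y0: "y0 \<in> cball p 1" "\<And>z. z \<in> cball p 1 \<Longrightarrow> h y0 \<le> h z"
    using lsc_min_compact[of h "cball p 1"] hl unfolding ext_lsc_def by force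
  have "h y0 \<le> h p" using y0 by auto
  moreover have "h y0 \<noteq> -\<infinity>" using hp unfolding ext_proper_def by auto
  ultimately obtain mr where mr: "h y0 = ereal mr" using hpr by (cases "h y0") auto
  have mrle: "mr \<le> hpr" using \<open>h y0 \<le> h p\<close> mr hpr by simp
  define C where "C = hpr - mr"
  have C0: "C \<ge> 0" using mrle C_def by simp
  have "ereal (mr - C * norm (y - p)) \<le> h y" for y
  proof (cases "norm (y - p) \<le> 1")
    case True
    then have "ereal mr \<le> h y" using y0(2)[of y] mr by (simp add: dist_norm norm_minus_commute)
    moreover have "mr - C * norm (y - p) \<le> mr" using C0 by simp
    ultimately show ?thesis by (meson ereal_less_eq(3) order_trans)
  next
    case False
    define t where "t = norm (y - p)"
    have t1: "t > 1" using False t_def by simp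
    define lam where "lam = 1 / t"
    have lam: "0 < lam" "lam < 1" using t1 lam_def by auto
    define q where "q = (1 - lam) *\<^sub>R p + lam *\<^sub>R y"
    have "q - p = lam *\<^sub>R (y - p)" unfolding q_def by (simp add: algebra_simps)
    then have "norm (q - p) = 1" using lam t1 unfolding lam_def t_def by simp
    then have "q \<in> cball p 1" by (simp add: dist_norm norm_minus_commute)
    then have hq: "ereal mr \<le> h q" using y0(2) mr by metis
    have cv: "h q \<le> ereal (1 - lam) * h p + ereal lam * h y"
      using hc lam unfolding ext_convex_def q_def by auto
    show ?thesis
    proof (cases "h y")
      case (real hy)
      have "mr \<le> (1 - lam) * hpr + lam * hy" using order_trans[OF hq] cv real hpr by fastforce
      then have "mr * t \<le> ((1 - lam) * hpr + lam * hy) * t"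
        using t1 by (intro mult_right_mono) auto
      also have "\<dots> = (t - 1) * hpr + hy" using lam_def t1 by (simp add: field_simps)
      finally have "mr - C * t \<le> hy" unfolding C_def using mrle by (simp add: algebra_simps)
      then show ?thesis using real t_def by simp
    qed (use hp in \<open>auto simp: ext_proper_def\<close>)
  qed
  then show ?thesis using p C0 by blast
qed

lemma quad_bound:
  fixes t a B D :: real
  assumes "t \<ge> 0" "a \<ge> 0" "D \<ge> 0" "t \<ge> a \<Longrightarrow> (t - a)^2 \<le> B + D * t"
  shows "t \<le> 1 + 2 * a + \<bar>B\<bar> + D"
proof (cases "t \<le> 1 \<or> t \<le> 2 * a")
  case True then show ?thesis using assms by auto
next
  case False
  then have t: "t > 1" "t > 2 * a" by auto
  have "(t - a)^2 \<le> B + D * t" using assms t by auto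
  then have "t * t \<le> \<bar>B\<bar> + (D + 2 * a) * t - a * a" by (simp add: power2_eq_square algebra_simps)
  also have "\<dots> \<le> \<bar>B\<bar> * t + (D + 2 * a) * t"
    using mult_left_mono[of 1 t "\<bar>B\<bar>"] t mult_nonneg_nonneg[of a a] assms(2) by linarith
  finally have "t * t \<le> (\<bar>B\<bar> + D + 2 * a) * t" by (simp add: algebra_simps)
  then have "t \<le> \<bar>B\<bar> + D + 2 * a" using t by simp
  then show ?thesis by simp
qed

lemma prox_min_exists:
  fixes h :: "'a::euclidean_space \<Rightarrow> ereal" and eta :: real and u :: 'a
  assumes hp: "ext_proper h" and hl: "ext_lsc h" and hc: "ext_convex h" and eta: "eta > 0"
  shows "\<exists>y. \<forall>z. h y + ereal ((norm (y - u))\<^sup>2 / (2 * eta)) \<le> h z + ereal ((norm (z - u))\<^sup>2 / (2 * eta))"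
proof -
  obtain p mr C where p: "h p \<noteq> \<infinity>" and C0: "C \<ge> 0" and lb: "\<And>y. ereal (mr - C * norm (y - p)) \<le> h y"
    using h_lower_linear[OF hp hl hc] by blast
  have pm: "h p \<noteq> -\<infinity>" using hp unfolding ext_proper_def by auto
  obtain hpr where hpr: "h p = ereal hpr" using p pm by (cases "h p") auto
  define qf where "qf = (\<lambda>y. (norm (y - u))\<^sup>2 / (2 * eta))"
  define c0 where "c0 = hpr + qf p"
  define S where "S = {y. h y + ereal (qf y) \<le> ereal c0}"
  have qcont: "continuous_on UNIV qf" unfolding qf_def using eta by (intro continuous_intros) auto
  have clS: "\<And>c. closed {y. h y + ereal (qf y) \<le> ereal c}"
    using lsc_add_cont[OF _ qcont] hl unfolding ext_lsc_def by blast
  define a where "a = norm (p - u)"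
  define R where "R = 1 + 2 * a + \<bar>2 * eta * (c0 - mr)\<bar> + 2 * eta * C"
  have bS: "S \<subseteq> cball p R"
  proof
    fix y assume "y \<in> S"
    then have yS: "h y + ereal (qf y) \<le> ereal c0" unfolding S_def by simp
    define t where "t = norm (y - p)"
    have "ereal (mr - C * t) + ereal (qf y) \<le> h y + ereal (qf y)"
      using lb[of y] unfolding t_def by (cases "h y") auto
    then have "mr - C * t + qf y \<le> c0" using yS by (metis order_trans plus_ereal.simps(1) ereal_less_eq(3))
    then have q: "(norm (y - u))\<^sup>2 \<le> 2 * eta * (c0 - mr) + (2 * eta * C) * t"
      unfolding qf_def using eta by (simp add: field_simps)
    have "t \<le> R" unfolding R_def
    proof (rule quad_bound)
      show "0 \<le> t" "0 \<le> a" "0 \<le> 2 * eta * C" using eta C0 unfolding t_def a_def by auto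
      assume ta: "a \<le> t"
      have "t - a \<le> norm (y - u)" unfolding t_def a_def
        using norm_triangle_ineq[of "y - u" "u - p"] by (simp add: norm_minus_commute)
      then have "(t - a)^2 \<le> (norm (y - u))\<^sup>2" using ta by (intro power_mono) auto
      then show "(t - a)^2 \<le> 2 * eta * (c0 - mr) + 2 * eta * C * t" using q by simp
    qed
    then show "y \<in> cball p R" unfolding t_def by (simp add: dist_norm norm_minus_commute)
  qed
  have cS: "compact S" using bS clS[of c0] unfolding S_def
    by (metis bounded_cball bounded_subset compact_eq_bounded_closed)
  have pS: "p \<in> S" unfolding S_def c0_def using hpr by simp
  obtain y where y: "y \<in> S" "\<And>z. z \<in> S \<Longrightarrow> h y + ereal (qf y) \<le> h z + ereal (qf z)"
    using lsc_min_compact[OF clS cS] pS by blast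
  have "h y + ereal (qf y) \<le> h z + ereal (qf z)" for z
  proof (cases "z \<in> S")
    case False
    then have "ereal c0 < h z + ereal (qf z)" unfolding S_def by auto
    moreover have "h y + ereal (qf y) \<le> ereal c0" using y(1) unfolding S_def by simp
    ultimately show ?thesis by (meson less_imp_le order_trans)
  qed (use y in auto)
  then have "\<forall>z. h y + ereal (qf y) \<le> h z + ereal (qf z)" by blast
  then show ?thesis unfolding qf_def by (rule exI)
qed

lemma le_eps_lemma:
  fixes A B K :: real
  assumes K: "K \<ge> 0" and h: "\<And>s. 0 < s \<Longrightarrow> s \<le> 1 \<Longrightarrow> A \<le> B + s * K"
  shows "A \<le> B"
proof (rule ccontr)
  assume "\<not> A \<le> B"
  then have d: "A - B > 0" by simp
  define s where "s = min 1 ((A - B) / (2 * K + 2))"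
  have s: "0 < s" "s \<le> 1" using d K unfolding s_def by auto
  have "s * K \<le> ((A - B) / (2 * K + 2)) * K" using K unfolding s_def by (intro mult_right_mono) auto
  also have "\<dots> < A - B"
  proof -
    have "K / (2 * K + 2) < 1" using K by (simp add: field_simps)
    then have "(A - B) * (K / (2 * K + 2)) < (A - B) * 1" using d by (intro mult_strict_left_mono)
    then show ?thesis by simp
  qed
  finally show False using h[OF s] by simp
qed

lemma norm_sq_add_scale:
  fixes a b :: "'a::real_inner"
  shows "(norm (a + s *\<^sub>R b))\<^sup>2 = (norm a)\<^sup>2 + 2 * s * inner a b + s\<^sup>2 * (norm b)\<^sup>2"
  by (simp only: power2_norm_eq_inner) (simp add: inner_add_left inner_add_right inner_commute power2_eq_square algebra_simps)

lemma min_subgrad: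
  fixes h :: "'a::euclidean_space \<Rightarrow> ereal" and eta :: real and u y :: 'a
  assumes hp: "ext_proper h" and hc: "ext_convex h" and eta: "eta > 0"
    and ymin: "\<And>z. h y + ereal ((norm (y - u))\<^sup>2 / (2 * eta)) \<le> h z + ereal ((norm (z - u))\<^sup>2 / (2 * eta))"
  shows "\<exists>hy. h y = ereal hy \<and> (\<forall>z. ereal (hy + inner (u - y) (z - y) / eta) \<le> h z)"
proof -
  obtain p where p: "h p \<noteq> \<infinity>" using hp unfolding ext_proper_def by auto
  have "h y \<noteq> \<infinity>"
  proof
    assume "h y = \<infinity>"
    then show False using ymin[of p] p hp unfolding ext_proper_def by auto
  qed
  moreover have "h y \<noteq> -\<infinity>" using hp unfolding ext_proper_def by auto
  ultimately obtain hy where hy: "h y = ereal hy" by (cases "h y") auto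
  have "ereal (hy + inner (u - y) (z - y) / eta) \<le> h z" for z
  proof (cases "h z")
    case (real hz)
    have key: "hy \<le> hz + inner (y - u) (z - y) / eta + s * ((norm (z - y))\<^sup>2 / (2 * eta))"
      if s: "0 < s" "s \<le> 1" for s
    proof -
      define w where "w = (1 - s) *\<^sub>R y + s *\<^sub>R z"
      have cv: "h w \<le> ereal (1 - s) * h y + ereal s * h z"
        using hc s unfolding ext_convex_def w_def by auto
      have wu: "w - u = (y - u) + s *\<^sub>R (z - y)" unfolding w_def by (simp add: algebra_simps)
      have m: "h y + ereal ((norm (y - u))\<^sup>2 / (2 * eta)) \<le> h w + ereal ((norm (w - u))\<^sup>2 / (2 * eta))"
        by (rule ymin)
      have cv': "h w \<le> ereal ((1 - s) * hy + s * hz)" using cv hy real by simp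
      have "ereal (hy + (norm (y - u))\<^sup>2 / (2 * eta)) \<le> h w + ereal ((norm (w - u))\<^sup>2 / (2 * eta))"
        using m hy by simp
      also have "\<dots> \<le> ereal ((1 - s) * hy + s * hz) + ereal ((norm (w - u))\<^sup>2 / (2 * eta))"
        using cv' by (rule add_right_mono)
      finally have "hy + (norm (y - u))\<^sup>2 / (2 * eta) \<le> (1 - s) * hy + s * hz + (norm (w - u))\<^sup>2 / (2 * eta)"
        by simp
      then have "hy + (norm (y - u))\<^sup>2 / (2 * eta) \<le> (1 - s) * hy + s * hz +
          ((norm (y - u))\<^sup>2 + 2 * s * inner (y - u) (z - y) + s\<^sup>2 * (norm (z - y))\<^sup>2) / (2 * eta)"
        unfolding wu norm_sq_add_scale by simp
      then have "s * hy \<le> s * (hz + inner (y - u) (z - y) / eta + s * ((norm (z - y))\<^sup>2 / (2 * eta)))"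
        using eta by (simp add: field_simps power2_eq_square)
      then show ?thesis using s by simp
    qed
    have "hy \<le> hz + inner (y - u) (z - y) / eta"
      by (rule le_eps_lemma[OF _ key]) (use eta in auto)
    moreover have "inner (u - y) (z - y) / eta = - (inner (y - u) (z - y) / eta)"
      by (metis inner_minus_left minus_diff_eq minus_divide_left)
    ultimately have "hy + inner (u - y) (z - y) / eta \<le> hz" by linarith
    then show ?thesis using real by simp
  qed (use hp in \<open>auto simp: ext_proper_def\<close>)
  then show ?thesis using hy by blast
qed

lemma prox_props:
  fixes h :: "'a::euclidean_space \<Rightarrow> ereal" and eta :: real and u :: 'a
  assumes hp: "ext_proper h" and hl: "ext_lsc h" and hc: "ext_convex h" and eta: "eta > 0"
  shows "\<exists>hy. h (prox h eta u) = ereal hy \<and>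
     (\<forall>z. ereal (hy + inner (u - prox h eta u) (z - prox h eta u) / eta) \<le> h z)"
proof -
  define P where "P = (\<lambda>y. \<forall>z. h y + ereal ((norm (y - u))\<^sup>2 / (2 * eta)) \<le> h z + ereal ((norm (z - u))\<^sup>2 / (2 * eta)))"
  obtain y0 where y0: "P y0" using prox_min_exists[OF hp hl hc eta] unfolding P_def by blast
  have uniq: "y1 = y2" if "P y1" "P y2" for y1 y2
  proof -
    have m1: "\<And>z. h y1 + ereal ((norm (y1 - u))\<^sup>2 / (2 * eta)) \<le> h z + ereal ((norm (z - u))\<^sup>2 / (2 * eta))"
      using that(1) unfolding P_def by blast
    have m2: "\<And>z. h y2 + ereal ((norm (y2 - u))\<^sup>2 / (2 * eta)) \<le> h z + ereal ((norm (z - u))\<^sup>2 / (2 * eta))"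
      using that(2) unfolding P_def by blast
    obtain h1 where h1: "h y1 = ereal h1" "\<And>z. ereal (h1 + inner (u - y1) (z - y1) / eta) \<le> h z"
      using min_subgrad[OF hp hc eta m1] by blast
    obtain h2 where h2: "h y2 = ereal h2" "\<And>z. ereal (h2 + inner (u - y2) (z - y2) / eta) \<le> h z"
      using min_subgrad[OF hp hc eta m2] by blast
    have a: "h1 + inner (u - y1) (y2 - y1) / eta \<le> h2" using h1(2)[of y2] h2(1) by simp
    have b: "h2 + inner (u - y2) (y1 - y2) / eta \<le> h1" using h2(2)[of y1] h1(1) by simp
    have "inner (u - y1) (y2 - y1) / eta + inner (u - y2) (y1 - y2) / eta \<le> 0" using a b by linarith
    then have "(inner (u - y1) (y2 - y1) + inner (u - y2) (y1 - y2)) / eta \<le> 0" by (simp add: add_divide_distrib)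
    then have "inner (u - y1) (y2 - y1) + inner (u - y2) (y1 - y2) \<le> 0"
      using eta by (simp add: divide_le_0_iff)
    moreover have "inner (u - y1) (y2 - y1) + inner (u - y2) (y1 - y2) = inner (y2 - y1) (y2 - y1)"
      by (simp add: inner_diff_left inner_diff_right inner_commute)
    ultimately have "inner (y2 - y1) (y2 - y1) \<le> 0" by simp
    then have "inner (y2 - y1) (y2 - y1) = 0" using inner_ge_zero[of "y2 - y1"] by linarith
    then show ?thesis by simp
  qed
  have "P (prox h eta u)" unfolding prox_def P_def[symmetric]
    by (rule theI[of P y0, OF y0 uniq[OF _ y0]])
  then have "\<And>z. h (prox h eta u) + ereal ((norm (prox h eta u - u))\<^sup>2 / (2 * eta)) \<le> h z + ereal ((norm (z - u))\<^sup>2 / (2 * eta))"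
    unfolding P_def by blast
  from min_subgrad[OF hp hc eta this] show ?thesis .
qed

lemma descent_i:
  fixes fi :: "'a::euclidean_space \<Rightarrow> real" and gi :: "'a \<Rightarrow> 'a"
  assumes der: "\<And>x. (fi has_derivative (\<lambda>v. gi x \<bullet> v)) (at x)"
    and lip: "\<And>x y. norm (gi x - gi y) \<le> L * norm (x - y)"
  shows "fi y \<le> fi x + gi x \<bullet> (y - x) + L / 2 * (norm (y - x))\<^sup>2"
proof -
  define d where "d = y - x"
  define k where "k = (\<lambda>t. fi (x + t *\<^sub>R d) - t * (gi x \<bullet> d) - L / 2 * t\<^sup>2 * (norm d)\<^sup>2)"
  have D: "\<exists>y. DERIV k t :> y \<and> y \<le> 0" if t: "0 \<le> t" "t \<le> 1" for t :: real
  proof -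
    have l: "((\<lambda>t. x + t *\<^sub>R d) has_derivative (\<lambda>s. s *\<^sub>R d)) (at t)"
      by (auto intro!: derivative_eq_intros)
    have c: "((\<lambda>t. fi (x + t *\<^sub>R d)) has_derivative (\<lambda>s. gi (x + t *\<^sub>R d) \<bullet> (s *\<^sub>R d))) (at t)"
      using has_derivative_compose[OF l der] by simp
    have fe: "(\<lambda>s. gi (x + t *\<^sub>R d) \<bullet> (s *\<^sub>R d)) = (*) (gi (x + t *\<^sub>R d) \<bullet> d)"
      by (auto simp: fun_eq_iff)
    have c2: "((\<lambda>t. fi (x + t *\<^sub>R d)) has_real_derivative (gi (x + t *\<^sub>R d) \<bullet> d)) (at t)"
      unfolding has_field_derivative_def using c[unfolded fe] .
    have kd: "(k has_real_derivative (gi (x + t *\<^sub>R d) \<bullet> d - gi x \<bullet> d - L * t * (norm d)\<^sup>2)) (at t)"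
      unfolding k_def by (rule derivative_eq_intros c2 refl | simp)+
    have "gi (x + t *\<^sub>R d) \<bullet> d - gi x \<bullet> d = (gi (x + t *\<^sub>R d) - gi x) \<bullet> d" by (simp add: inner_diff_left)
    also have "\<dots> \<le> norm (gi (x + t *\<^sub>R d) - gi x) * norm d" by (rule norm_cauchy_schwarz)
    also have "\<dots> \<le> (L * norm (t *\<^sub>R d)) * norm d" using lip[of "x + t *\<^sub>R d" x] by (simp add: mult_right_mono)
    also have "\<dots> = L * t * (norm d)\<^sup>2" using t by (simp add: power2_eq_square)
    finally have le: "gi (x + t *\<^sub>R d) \<bullet> d - gi x \<bullet> d \<le> L * t * (norm d)\<^sup>2" .
    show "\<exists>y. DERIV k t :> y \<and> y \<le> 0" using kd le by (intro exI[of _ "gi (x + t *\<^sub>R d) \<bullet> d - gi x \<bullet> d - L * t * (norm d)\<^sup>2"]) auto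
  qed
  have "k 0 \<ge> k 1" by (rule DERIV_nonpos_imp_nonincreasing[OF _ D]) auto
  then show ?thesis unfolding k_def d_def by (simp add: algebra_simps)
qed

lemma lin_aux:
  fixes hy :: real
  shows "hy + X1 \<le> hxb \<Longrightarrow> hxb + X2 \<le> hx \<Longrightarrow> fy \<le> fx + Ga + LA \<Longrightarrow> X1 = Pe - Vb \<Longrightarrow> X2 = Ce - Gc
  \<Longrightarrow> Ce = Ae - 2 * (Pe) + Be \<Longrightarrow> Q = Vb + Ga + Gc \<Longrightarrow> Q \<le> ED + Be / 2
  \<Longrightarrow> fy + hy + Ce / 2 + (Ae / 2 - LA) \<le> fx + hx + ED"
  by linarith

lemma step_alg:
  fixes x y xb g v :: "'a::real_inner"
  assumes eta: "eta > 0"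
    and S1: "hy + inner (x - eta *\<^sub>R v - y) (xb - y) / eta \<le> hxb"
    and S2: "hxb + inner (x - eta *\<^sub>R g - xb) (x - xb) / eta \<le> hx"
    and U1: "fy \<le> fx + inner g (y - x) + L / 2 * (norm (y - x))\<^sup>2"
  shows "fy + hy + (norm (x - xb))\<^sup>2 / (2 * eta) + (1 / (2 * eta) - L / 2) * (norm (y - x))\<^sup>2
         \<le> fx + hx + eta / 2 * (norm (v - g))\<^sup>2"
proof -
  define A where "A = (norm (x - y))\<^sup>2"
  define B where "B = (norm (xb - y))\<^sup>2"
  define C where "C = (norm (x - xb))\<^sup>2"
  define P where "P = inner (x - y) (xb - y)"
  define Vb where "Vb = inner v (xb - y)"
  define Ga where "Ga = inner g (y - x)"
  define Gc where "Gc = inner g (x - xb)"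
  define D where "D = (norm (v - g))\<^sup>2"
  define Q where "Q = inner (v - g) (xb - y)"
  have e1: "inner (x - eta *\<^sub>R v - y) (xb - y) / eta = P / eta - Vb"
    unfolding P_def Vb_def using eta by (simp add: inner_diff_left inner_add_left field_simps)
  have e2: "inner (x - eta *\<^sub>R g - xb) (x - xb) / eta = C / eta - Gc"
    unfolding C_def Gc_def using eta by (simp add: inner_diff_left inner_add_left field_simps power2_norm_eq_inner)
  have e3: "C = A - 2 * P + B"
  proof -
    have "x - xb = (x - y) - (xb - y)" by simp
    then have "C = inner ((x - y) - (xb - y)) ((x - y) - (xb - y))" unfolding C_def
      by (metis power2_norm_eq_inner)
    also have "\<dots> = A - 2 * P + B" unfolding A_def B_def P_def
      by (simp add: inner_diff_left inner_diff_right inner_commute power2_norm_eq_inner)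
    finally show ?thesis .
  qed
  then have e3': "C / eta = A / eta - 2 * (P / eta) + B / eta" by (simp add: diff_divide_distrib add_divide_distrib)
  have e4: "Q = Vb + Ga + Gc" unfolding Q_def Vb_def Ga_def Gc_def
    by (simp add: inner_diff_left inner_diff_right)
  have young: "Q \<le> eta / 2 * D + (B / eta) / 2"
  proof -
    have "0 \<le> (norm (eta *\<^sub>R (v - g) - (xb - y)))\<^sup>2" by simp
    also have "\<dots> = eta\<^sup>2 * D - 2 * eta * Q + B" unfolding D_def Q_def B_def power2_norm_eq_inner
      by (simp add: inner_diff_left inner_diff_right inner_commute power2_eq_square algebra_simps)
    finally have "2 * eta * Q \<le> eta\<^sup>2 * D + B" by simp
    then have "(2 * eta * Q) / (2 * eta) \<le> (eta\<^sup>2 * D + B) / (2 * eta)" using eta by (intro divide_right_mono) auto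
    then show ?thesis using eta by (simp add: field_simps power2_eq_square)
  qed
  have n1: "(norm (y - x))\<^sup>2 = A" unfolding A_def by (simp add: norm_minus_commute)
  have g1: "C / (2 * eta) = (C / eta) / 2" "(1 / (2 * eta) - L / 2) * A = (A / eta) / 2 - L / 2 * A" 
    by (simp_all add: field_simps)
  have U1': "fy \<le> fx + Ga + L / 2 * A" using U1 n1 unfolding Ga_def by simp
  show ?thesis unfolding n1 C_def[symmetric] D_def[symmetric] g1
    by (rule lin_aux[OF S1 S2 U1' e1 e2 e3' e4 young])
qed

lemma descent_avg:
  fixes f :: "nat \<Rightarrow> 'a::euclidean_space \<Rightarrow> real" and gf :: "nat \<Rightarrow> 'a \<Rightarrow> 'a"
  assumes n: "n \<ge> 1"
    and grad: "\<And>i x. i < n \<Longrightarrow> (f i has_derivative (\<lambda>v. gf i x \<bullet> v)) (at x)"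
    and smooth: "\<And>i x y. i < n \<Longrightarrow> norm (gf i x - gf i y) \<le> L * norm (x - y)"
  shows "(\<Sum>j<n. f j y) / real n \<le> (\<Sum>j<n. f j x) / real n + avg_grad n gf x \<bullet> (y - x) + L / 2 * (norm (y - x))\<^sup>2"
proof -
  have "(\<Sum>j<n. f j y) \<le> (\<Sum>j<n. f j x + gf j x \<bullet> (y - x) + L / 2 * (norm (y - x))\<^sup>2)"
    by (rule sum_mono) (rule descent_i[OF grad smooth], auto)
  also have "\<dots> = (\<Sum>j<n. f j x) + (\<Sum>j<n. gf j x \<bullet> (y - x)) + real n * (L / 2 * (norm (y - x))\<^sup>2)"
    by (simp add: sum.distrib)
  finally have le: "(\<Sum>j<n. f j y) / real n \<le> ((\<Sum>j<n. f j x) + (\<Sum>j<n. gf j x \<bullet> (y - x)) + real n * (L / 2 * (norm (y - x))\<^sup>2)) / real n"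
    using n by (intro divide_right_mono) auto
  have eq: "avg_grad n gf x \<bullet> (y - x) = (\<Sum>j<n. gf j x \<bullet> (y - x)) / real n"
    unfolding avg_grad_def by (simp add: inner_sum_left)
  show ?thesis using le n unfolding eq by (simp add: add_divide_distrib)
qed

lemma noise_bound:
  fixes gf :: "nat \<Rightarrow> 'a \<Rightarrow> 'a::euclidean_space"
  assumes n: "n \<ge> 1" and i: "i < n"
    and smooth: "\<And>i x y. i < n \<Longrightarrow> norm (gf i x - gf i y) \<le> L * norm (x - y)"
  shows "norm ((gf i x - gf i xs + avg_grad n gf xs) - avg_grad n gf x) \<le> 2 * L * norm (x - xs)"
proof -
  have ad: "avg_grad n gf x - avg_grad n gf xs = (1 / real n) *\<^sub>R (\<Sum>j<n. gf j x - gf j xs)"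
    unfolding avg_grad_def by (simp add: sum_subtractf scaleR_diff_right)
  have "norm (\<Sum>j<n. gf j x - gf j xs) \<le> (\<Sum>j<n. norm (gf j x - gf j xs))" by (rule norm_sum)
  also have "\<dots> \<le> (\<Sum>j<n. L * norm (x - xs))" by (rule sum_mono) (use smooth in auto)
  also have "\<dots> = real n * (L * norm (x - xs))" by simp
  finally have s: "norm (\<Sum>j<n. gf j x - gf j xs) \<le> real n * (L * norm (x - xs))" .
  have "norm (avg_grad n gf x - avg_grad n gf xs) = norm (\<Sum>j<n. gf j x - gf j xs) / real n"
    unfolding ad by simp
  also have "\<dots> \<le> L * norm (x - xs)" using s n by (simp add: pos_divide_le_eq mult.commute)
  finally have a: "norm (avg_grad n gf x - avg_grad n gf xs) \<le> L * norm (x - xs)" .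
  have "(gf i x - gf i xs + avg_grad n gf xs) - avg_grad n gf x = (gf i x - gf i xs) - (avg_grad n gf x - avg_grad n gf xs)"
    by (simp add: algebra_simps)
  also have "norm \<dots> \<le> norm (gf i x - gf i xs) + norm (avg_grad n gf x - avg_grad n gf xs)" by (rule norm_triangle_ineq4)
  also have "\<dots> \<le> L * norm (x - xs) + L * norm (x - xs)" using a smooth[OF i, of x xs] by simp
  finally show ?thesis by simp
qed

lemma step_main:
  fixes f :: "nat \<Rightarrow> 'a::euclidean_space \<Rightarrow> real" and gf :: "nat \<Rightarrow> 'a \<Rightarrow> 'a" and h :: "'a \<Rightarrow> ereal" and x xs :: 'a
  assumes n: "n \<ge> 1" and L: "L > 0"
    and grad: "\<And>i x. i < n \<Longrightarrow> (f i has_derivative (\<lambda>v. gf i x \<bullet> v)) (at x)"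
    and smooth: "\<And>i x y. i < n \<Longrightarrow> norm (gf i x - gf i y) \<le> L * norm (x - y)"
    and hp: "ext_proper h" and hl: "ext_lsc h" and hc: "ext_convex h" and eta: "eta > 0"
    and hx: "h x = ereal hx" and i: "i < n"
  defines "y \<equiv> prox h eta (x - eta *\<^sub>R (gf i x - gf i xs + avg_grad n gf xs))"
  shows "\<exists>hy. h y = ereal hy \<and>
     (\<Sum>j<n. f j y) / real n + hy + eta / 2 * (norm (grad_mapping n gf h eta x))\<^sup>2
       + (1 / (2 * eta) - L / 2) * (norm (y - x))\<^sup>2
     \<le> (\<Sum>j<n. f j x) / real n + hx + 2 * eta * L\<^sup>2 * (norm (x - xs))\<^sup>2"
proof -
  define v where "v = gf i x - gf i xs + avg_grad n gf xs"
  define g where "g = avg_grad n gf x"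
  define xb where "xb = prox h eta (x - eta *\<^sub>R g)"
  obtain hy where hy: "h y = ereal hy" "\<And>z. ereal (hy + inner ((x - eta *\<^sub>R v) - y) (z - y) / eta) \<le> h z"
    using prox_props[OF hp hl hc eta, of "x - eta *\<^sub>R v"] unfolding y_def v_def by blast
  obtain hxb where hxb: "h xb = ereal hxb" "\<And>z. ereal (hxb + inner ((x - eta *\<^sub>R g) - xb) (z - xb) / eta) \<le> h z"
    using prox_props[OF hp hl hc eta, of "x - eta *\<^sub>R g"] unfolding xb_def by blast
  have S1: "hy + inner (x - eta *\<^sub>R v - y) (xb - y) / eta \<le> hxb" using hy(2)[of xb] hxb(1) by simp
  have S2: "hxb + inner (x - eta *\<^sub>R g - xb) (x - xb) / eta \<le> hx" using hxb(2)[of x] hx by simp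
  have U1: "(\<Sum>j<n. f j y) / real n \<le> (\<Sum>j<n. f j x) / real n + inner g (y - x) + L / 2 * (norm (y - x))\<^sup>2"
    unfolding g_def by (rule descent_avg[OF n grad smooth])
  have st: "(\<Sum>j<n. f j y) / real n + hy + (norm (x - xb))\<^sup>2 / (2 * eta) + (1 / (2 * eta) - L / 2) * (norm (y - x))\<^sup>2
         \<le> (\<Sum>j<n. f j x) / real n + hx + eta / 2 * (norm (v - g))\<^sup>2"
    by (rule step_alg[OF eta S1 S2 U1])
  have G0: "norm (grad_mapping n gf h eta x) = norm (x - xb) / eta"
    unfolding grad_mapping_def xb_def g_def using eta by simp
  have G: "eta / 2 * (norm (grad_mapping n gf h eta x))\<^sup>2 = (norm (x - xb))\<^sup>2 / (2 * eta)"
    unfolding G0 using eta by (simp add: power2_eq_square field_simps)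
  have nb: "norm (v - g) \<le> 2 * L * norm (x - xs)" unfolding v_def g_def by (rule noise_bound[OF n i smooth])
  then have "(norm (v - g))\<^sup>2 \<le> (2 * L * norm (x - xs))\<^sup>2" by (intro power_mono) auto
  then have "eta / 2 * (norm (v - g))\<^sup>2 \<le> eta / 2 * (2 * L * norm (x - xs))\<^sup>2" using eta by (intro mult_left_mono) auto
  also have "\<dots> = 2 * eta * L\<^sup>2 * (norm (x - xs))\<^sup>2" by (simp add: power2_eq_square)
  finally have "eta / 2 * (norm (v - g))\<^sup>2 \<le> 2 * eta * L\<^sup>2 * (norm (x - xs))\<^sup>2" .
  then show ?thesis using st G hy(1) by auto
qed

lemma state_Suc1:
  "svrg_state n gf h x0 m 1 eta w (Suc k) =
    (let S = svrg_state n gf h x0 m 1 eta w k;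
         sn = (if k mod m = 0 then fst S else snd S)
     in (prox h eta (fst S - eta *\<^sub>R (gf (w (k, 0)) (fst S) - gf (w (k, 0)) sn + avg_grad n gf sn)), sn))"
  by (simp add: Let_def split: prod.split)

lemma snap_lemma:
  assumes n: "n \<ge> 1" and t: "t < n"
  shows "snd (svrg_state n gf h x0 n 1 eta w (s * n + t + 1)) = svrg_iter n gf h x0 n 1 eta w (s * n)"
  using t
proof (induction t)
  case 0
  then show ?case unfolding svrg_iter_def by (simp add: state_Suc1 state_Suc1[unfolded One_nat_def] Let_def del: svrg_state.simps)
next
  case (Suc t)
  have m: "(s * n + Suc t) mod n = Suc t" using Suc.prems by simp
  define k where "k = s * n + Suc t"
  have mk: "k mod n \<noteq> 0" using m unfolding k_def by simp
  have "snd (svrg_state n gf h x0 n 1 eta w (Suc k)) = snd (svrg_state n gf h x0 n 1 eta w k)"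
    using mk by (simp only: state_Suc1 Let_def if_False snd_conv)
  then have "snd (svrg_state n gf h x0 n 1 eta w (s * n + Suc t + 1)) = snd (svrg_state n gf h x0 n 1 eta w (s * n + Suc t))"
    unfolding k_def by simp
  also have "\<dots> = svrg_iter n gf h x0 n 1 eta w (s * n)" using Suc by simp
  finally show ?case .
qed

lemma iter_step:
  fixes gf :: "nat \<Rightarrow> 'a \<Rightarrow> 'a::real_normed_vector" and h x0 eta w
  assumes n: "n \<ge> 1" and t: "t < n"
  defines "X \<equiv> svrg_iter n gf h x0 n 1 eta w"
  shows "X (s * n + t + 1) = prox h eta (X (s * n + t) - eta *\<^sub>R
      (gf (w (s * n + t, 0)) (X (s * n + t)) - gf (w (s * n + t, 0)) (X (s * n)) + avg_grad n gf (X (s * n))))"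
proof (cases t)
  case 0
  then show ?thesis unfolding X_def svrg_iter_def by (simp add: state_Suc1 state_Suc1[unfolded One_nat_def] Let_def del: svrg_state.simps)
next
  case (Suc t')
  define k where "k = s * n + t"
  have m: "k mod n \<noteq> 0" using t Suc unfolding k_def by simp
  have k1: "k = s * n + t' + 1" unfolding k_def using Suc by simp
  have sn: "snd (svrg_state n gf h x0 n 1 eta w k) = X (s * n)"
    unfolding X_def k1 using snap_lemma[OF n, of t'] Suc t by simp
  have st: "svrg_state n gf h x0 n 1 eta w (Suc k) =
    (prox h eta (fst (svrg_state n gf h x0 n 1 eta w k) - eta *\<^sub>R (gf (w (k, 0)) (fst (svrg_state n gf h x0 n 1 eta w k))
       - gf (w (k, 0)) (snd (svrg_state n gf h x0 n 1 eta w k)) + avg_grad n gf (snd (svrg_state n gf h x0 n 1 eta w k)))),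
     snd (svrg_state n gf h x0 n 1 eta w k))"
    using m by (simp only: state_Suc1 Let_def if_False)
  have "X (s * n + t + 1) = fst (svrg_state n gf h x0 n 1 eta w (Suc k))" unfolding X_def svrg_iter_def k_def by simp
  also have "\<dots> = prox h eta (X k - eta *\<^sub>R (gf (w (k, 0)) (X k) - gf (w (k, 0)) (X (s * n)) + avg_grad n gf (X (s * n))))"
    unfolding st sn by (simp add: X_def svrg_iter_def)
  finally show ?thesis unfolding k_def .
qed

lemma sq_acc:
  fixes r d t P :: real
  assumes "r \<ge> 0" "d \<ge> 0" "t \<ge> 0" "r^2 \<le> t * P" "P \<ge> 0"
  shows "(r + d)^2 \<le> (t + 1) * (P + d^2)"
proof (cases "t = 0")
  case True
  then have "r^2 \<le> 0" using assms by simp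
  then have "r = 0" using assms by (simp add: power2_eq_square) (metis mult_eq_0_iff mult_nonneg_nonneg order_antisym)
  then show ?thesis using True assms by simp
next
  case False
  then have t: "t > 0" using assms by simp
  have id: "t * (r + d)^2 + (r - t * d)^2 = (t + 1) * r^2 + t * (t + 1) * d^2"
    by (simp add: power2_eq_square algebra_simps)
  have "(t + 1) * r^2 \<le> (t + 1) * (t * P)" using assms by (intro mult_left_mono) auto
  moreover have "(t + 1) * (t * P) + t * (t + 1) * d^2 = t * ((t + 1) * (P + d^2))" by (simp add: algebra_simps)
  ultimately have "t * (r + d)^2 \<le> t * ((t + 1) * (P + d^2))" using id zero_le_power2[of "r - t * d"]
    by linarith
  then show ?thesis using t by simp
qed

context
  fixes n :: nat and L eta :: real and f :: "nat \<Rightarrow> 'a::euclidean_space \<Rightarrow> real"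
    and gf :: "nat \<Rightarrow> 'a \<Rightarrow> 'a" and h :: "'a \<Rightarrow> ereal" and x0 :: 'a and w :: "nat \<times> nat \<Rightarrow> nat" and T :: nat
  assumes n: "n \<ge> 1" and L: "L > 0"
    and grad: "\<And>i x. i < n \<Longrightarrow> (f i has_derivative (\<lambda>v. gf i x \<bullet> v)) (at x)"
    and smooth: "\<And>i x y. i < n \<Longrightarrow> norm (gf i x - gf i y) \<le> L * norm (x - y)"
    and hp: "ext_proper h" and hl: "ext_lsc h" and hc: "ext_convex h"
    and eta_def: "eta = 1 / (3 * L * real n)"
    and wT: "\<And>k. k < T \<Longrightarrow> w (k, 0) < n"
begin

abbreviation X where "X \<equiv> svrg_iter n gf h x0 n 1 eta w"
abbreviation Gs where "Gs k \<equiv> (norm (grad_mapping n gf h eta (X k)))\<^sup>2"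
abbreviation Fa where "Fa z \<equiv> (\<Sum>j<n. f j z) / real n"
abbreviation Ps where "Ps s t \<equiv> (\<Sum>j<t. (norm (X (s * n + j + 1) - X (s * n + j)))\<^sup>2)"

lemma eta_pos: "eta > 0" using n L unfolding eta_def by simp

lemma c_le_g: "2 * eta * L\<^sup>2 * real n * (real n - 1) \<le> 1 / (2 * eta) - L / 2"
proof -
  have a: "2 * eta * L\<^sup>2 * real n * (real n - 1) = 2 * L * (real n - 1) / 3"
    unfolding eta_def using n L by (simp add: power2_eq_square field_simps)
  have b: "1 / (2 * eta) - L / 2 = L * (3 * real n - 1) / 2"
    unfolding eta_def using n L by (simp add: field_simps)
  have c: "2 * L * (real n - 1) / 3 \<le> L * (3 * real n - 1) / 2" using n L by (simp add: field_simps)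
  show ?thesis using a b c by linarith
qed

lemma epoch:
  assumes sT: "(s + 1) * n \<le> T" and h0: "h (X (s * n)) = ereal h0"
  shows "t \<le> n \<Longrightarrow> \<exists>ht. h (X (s * n + t)) = ereal ht \<and>
     Fa (X (s * n + t)) + ht + eta / 2 * (\<Sum>k<s * n + t. Gs k)
       + (2 * eta * L\<^sup>2 * real n) * (real n - real t) * Ps s t
     \<le> Fa (X (s * n)) + h0 + eta / 2 * (\<Sum>k<s * n. Gs k)
     \<and> (norm (X (s * n + t) - X (s * n)))\<^sup>2 \<le> real t * Ps s t"
proof (induction t)
  case 0
  then show ?case using h0 by simp
next
  case (Suc t)
  then have t: "t < n" by simp
  from Suc.IH t obtain ht where ht: "h (X (s * n + t)) = ereal ht"
    and IH: "Fa (X (s * n + t)) + ht + eta / 2 * (\<Sum>k<s * n + t. Gs k)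
       + (2 * eta * L\<^sup>2 * real n) * (real n - real t) * Ps s t
     \<le> Fa (X (s * n)) + h0 + eta / 2 * (\<Sum>k<s * n. Gs k)"
    and R: "(norm (X (s * n + t) - X (s * n)))\<^sup>2 \<le> real t * Ps s t" by auto
  define i where "i = w (s * n + t, 0)"
  have i: "i < n" unfolding i_def using sT t by (intro wT) (simp add: algebra_simps)
  define x where "x = X (s * n + t)"
  define xs where "xs = X (s * n)"
  define y where "y = X (s * n + t + 1)"
  have yeq: "y = prox h eta (x - eta *\<^sub>R (gf i x - gf i xs + avg_grad n gf xs))"
    unfolding y_def x_def xs_def i_def by (rule iter_step[OF n t])
  obtain hy where hy: "h y = ereal hy" and st: "Fa y + hy + eta / 2 * (norm (grad_mapping n gf h eta x))\<^sup>2
       + (1 / (2 * eta) - L / 2) * (norm (y - x))\<^sup>2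
     \<le> Fa x + ht + 2 * eta * L\<^sup>2 * (norm (x - xs))\<^sup>2"
  proof -
    have hxr: "h x = ereal ht" using ht unfolding x_def .
    show ?thesis using step_main[where f=f and gf=gf and h=h and x=x and xs=xs and hx=ht and i=i and n=n and L=L and eta=eta, OF n L grad smooth hp hl hc eta_pos hxr i] that unfolding yeq by blast
  qed
  define c where "c = 2 * eta * L\<^sup>2 * real n"
  define P where "P = Ps s t"
  define d where "d = norm (y - x)"
  define r where "r = norm (x - xs)"
  define g where "g = 1 / (2 * eta) - L / 2"
  have c0: "c \<ge> 0" unfolding c_def using eta_pos by simp
  have P0: "P \<ge> 0" unfolding P_def by (intro sum_nonneg) auto
  have Psuc: "Ps s (Suc t) = P + d\<^sup>2" unfolding P_def d_def y_def x_def by (simp add: add.commute)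
  have Gsuc: "(\<Sum>k<s * n + Suc t. Gs k) = (\<Sum>k<s * n + t. Gs k) + (norm (grad_mapping n gf h eta x))\<^sup>2"
    unfolding x_def by simp
  have rP: "r\<^sup>2 \<le> real t * P" using R unfolding r_def x_def xs_def P_def .
  have "r\<^sup>2 \<le> real n * P" using rP P0 t by (meson less_imp_le mult_right_mono of_nat_le_iff order_trans)
  then have noise: "2 * eta * L\<^sup>2 * r\<^sup>2 \<le> c * P" unfolding c_def using eta_pos
    by (simp add: mult_left_mono mult.assoc)
  define K where "K = c * (real n - real (Suc t))"
  have K0: "K \<ge> 0" unfolding K_def using c0 t by simp
  have Kg: "K \<le> g"
  proof -
    have "K \<le> c * (real n - 1)" unfolding K_def using c0 by (intro mult_left_mono) auto
    also have "\<dots> \<le> g" unfolding c_def g_def using c_le_g by (simp add: mult.assoc)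
    finally show ?thesis .
  qed
  have Kd: "K * d\<^sup>2 \<le> g * d\<^sup>2" using Kg by (intro mult_right_mono) auto
  have e1: "c * (real n - real t) * P = K * P + c * P" unfolding K_def by (simp add: algebra_simps)
  have e2: "c * (real n - real (Suc t)) * (P + d\<^sup>2) = K * P + K * d\<^sup>2" unfolding K_def by (simp add: algebra_simps)
  have main: "Fa y + hy + eta / 2 * (\<Sum>k<s * n + Suc t. Gs k) + c * (real n - real (Suc t)) * Ps s (Suc t)
     \<le> Fa xs + h0 + eta / 2 * (\<Sum>k<s * n. Gs k)"
  proof -
    have "eta / 2 * (\<Sum>k<s * n + Suc t. Gs k) = eta / 2 * (\<Sum>k<s * n + t. Gs k) + eta / 2 * (norm (grad_mapping n gf h eta x))\<^sup>2"
      unfolding Gsuc by (simp add: distrib_left)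
    then show ?thesis unfolding Psuc e2 using st IH e1 noise Kd
      unfolding c_def[symmetric] P_def[symmetric] d_def[symmetric] r_def[symmetric] g_def[symmetric] x_def[symmetric] xs_def[symmetric]
      by linarith
  qed
  have rr: "(norm (y - xs))\<^sup>2 \<le> real (Suc t) * Ps s (Suc t)"
  proof -
    have "norm (y - xs) \<le> r + d" unfolding r_def d_def using norm_triangle_ineq[of "y - x" "x - xs"] by (simp add: add.commute)
    then have "(norm (y - xs))\<^sup>2 \<le> (r + d)\<^sup>2" by (intro power_mono) auto
    also have "\<dots> \<le> (real t + 1) * (P + d\<^sup>2)" by (rule sq_acc) (use rP P0 in \<open>auto simp: r_def d_def\<close>)
    finally show ?thesis unfolding Psuc by (simp add: add.commute)
  qed
  show ?case using hy main rr unfolding y_def xs_def c_def by (intro exI[of _ hy]) (simp add: add.commute)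
qed

lemma X0: "X 0 = x0" by (simp add: svrg_iter_def)

lemma global:
  assumes h0: "h x0 = ereal h0"
  shows "s * n \<le> T \<Longrightarrow> \<exists>hs. h (X (s * n)) = ereal hs \<and> Fa (X (s * n)) + hs + eta / 2 * (\<Sum>k<s * n. Gs k) \<le> Fa x0 + h0"
proof (induction s)
  case 0
  then show ?case using h0 X0 by simp
next
  case (Suc s)
  then have sT: "(s + 1) * n \<le> T" by simp
  then have "s * n \<le> T" by simp
  with Suc.IH obtain hs where hs: "h (X (s * n)) = ereal hs"
    and I: "Fa (X (s * n)) + hs + eta / 2 * (\<Sum>k<s * n. Gs k) \<le> Fa x0 + h0" by blast
  obtain ht where ht: "h (X (s * n + n)) = ereal ht"
    and E: "Fa (X (s * n + n)) + ht + eta / 2 * (\<Sum>k<s * n + n. Gs k)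
       + (2 * eta * L\<^sup>2 * real n) * (real n - real n) * Ps s n
     \<le> Fa (X (s * n)) + hs + eta / 2 * (\<Sum>k<s * n. Gs k)"
    using epoch[OF sT hs, of n] by blast
  have e: "Suc s * n = s * n + n" by simp
  show ?case unfolding e using ht E I by (intro exI[of _ ht]) simp
qed

end

theorem theorem1:
  fixes n :: nat and L :: real and T :: nat
    and f :: "nat \<Rightarrow> 'a::euclidean_space \<Rightarrow> real" and gf :: "nat \<Rightarrow> 'a \<Rightarrow> 'a"
    and h :: "'a \<Rightarrow> ereal" and x0 xstar :: 'a
  assumes n: "n \<ge> 1"
    and L: "L > 0"
    and grad: "\<And>i x. i < n \<Longrightarrow> (f i has_derivative (\<lambda>v. gf i x \<bullet> v)) (at x)"
    and smooth: "\<And>i x y. i < n \<Longrightarrow> norm (gf i x - gf i y) \<le> L * norm (x - y)"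
    and h_proper: "ext_proper h" and h_lsc: "ext_lsc h" and h_convex: "ext_convex h"
    and h_dom: "closed (ext_dom h)"
    and opt: "\<And>x. ereal ((\<Sum>i<n. f i xstar) / real n) + h xstar
                   \<le> ereal ((\<Sum>i<n. f i x) / real n) + h x"
    and T: "T > 0" "n dvd T"
  shows "ereal (svrg_expected_gm n gf h x0 T n 1 (1 / (3 * L * real n)))
         \<le> ereal (18 * L * (real n)\<^sup>2 / (3 * real n - 2) / real T)
           * ((ereal ((\<Sum>i<n. f i x0) / real n) + h x0)
              - (ereal ((\<Sum>i<n. f i xstar) / real n) + h xstar))"
proof -
  define eta where "eta = 1 / (3 * L * real n)"
  have eta0: "eta > 0" unfolding eta_def using n L by simp
  define C where "C = 18 * L * (real n)\<^sup>2 / (3 * real n - 2) / real T"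
  have C0: "C > 0" unfolding C_def using n L T by simp
  obtain p where p: "h p \<noteq> \<infinity>" using h_proper unfolding ext_proper_def by auto
  have hnm: "\<And>x. h x \<noteq> -\<infinity>" using h_proper unfolding ext_proper_def by auto
  have "h xstar \<noteq> \<infinity>"
  proof
    assume "h xstar = \<infinity>"
    then show False using opt[of p] p hnm[of p] by (cases "h p") auto
  qed
  then obtain hs where hs: "h xstar = ereal hs" using hnm[of xstar] by (cases "h xstar") auto
  define Fs where "Fs = (\<Sum>i<n. f i xstar) / real n"
  show ?thesis
  proof (cases "h x0")
    case PInf
    have R: "ereal (18 * L * (real n)\<^sup>2 / (3 * real n - 2) / real T)
           * ((ereal ((\<Sum>i<n. f i x0) / real n) + h x0)
              - (ereal ((\<Sum>i<n. f i xstar) / real n) + h xstar)) = \<infinity>"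
    proof -
      have "real n \<ge> 1" using n by simp
      then have "3 * real n \<noteq> 2" by linarith
      then show ?thesis using C0 PInf hs n L T unfolding C_def by simp
    qed
    show ?thesis unfolding R by simp
  next
    case MInf
    then show ?thesis using hnm by simp
  next
    case (real h0)
    define D where "D = (\<Sum>i<n. f i x0) / real n + h0 - (Fs + hs)"
    have D0: "D \<ge> 0" using opt[of x0] real hs unfolding D_def Fs_def by simp
    define W where "W = PiE ({0..<T} \<times> {0..<1}) (\<lambda>_::nat \<times> nat. {0..<n})"
    have Wfin: "finite W" unfolding W_def by (intro finite_PiE) auto
    have Wne: "W \<noteq> {}" unfolding W_def using n by (simp add: PiE_eq_empty_iff)
    have Tdiv: "T div n * n = T" using T(2) by simp
    have steps: "svrg_steps T n = T"
    proof -
      have "real T / real n = real (T div n)" using T(2) n by (simp add: real_of_nat_div)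
      then show ?thesis unfolding svrg_steps_def using Tdiv by simp
    qed
    define g where "g = (\<lambda>w a. (norm (grad_mapping n gf h eta (svrg_iter n gf h x0 n 1 eta w a)))\<^sup>2)"
    have bound: "(\<Sum>a<T. g w a) \<le> 6 * L * real n * D" if w: "w \<in> W" for w
    proof -
      have wT: "\<And>k. k < T \<Longrightarrow> w (k, 0) < n" using w unfolding W_def by (auto simp: PiE_iff)
      obtain hT where hT: "h (svrg_iter n gf h x0 n 1 eta w (T div n * n)) = ereal hT"
        and G: "(\<Sum>j<n. f j (svrg_iter n gf h x0 n 1 eta w (T div n * n))) / real n + hT
            + eta / 2 * (\<Sum>k<T div n * n. g w k) \<le> (\<Sum>j<n. f j x0) / real n + h0"
        using global[where n=n and L=L and eta=eta and f=f and gf=gf and h=h and w=w and T=T and s="T div n",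
            OF n L grad smooth h_proper h_lsc h_convex eta_def wT real] Tdiv unfolding g_def by auto
      have "Fs + hs \<le> (\<Sum>j<n. f j (svrg_iter n gf h x0 n 1 eta w (T div n * n))) / real n + hT"
        using opt[of "svrg_iter n gf h x0 n 1 eta w (T div n * n)"] hT hs unfolding Fs_def by simp
      moreover have G': "(\<Sum>j<n. f j (svrg_iter n gf h x0 n 1 eta w (T div n * n))) / real n + hT
            + eta / 2 * (\<Sum>k<T. g w k) \<le> (\<Sum>j<n. f j x0) / real n + h0" using G unfolding Tdiv .
      ultimately have "eta / 2 * (\<Sum>a<T. g w a) \<le> D" unfolding D_def by linarith
      then have "(\<Sum>a<T. g w a) \<le> D / (eta / 2)" using eta0 by (simp add: field_simps)
      also have "D / (eta / 2) = 6 * L * real n * D" unfolding eta_def using n L by (simp add: field_simps)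
      finally show ?thesis .
    qed
    have E: "svrg_expected_gm n gf h x0 T n 1 eta = (\<Sum>w\<in>W. \<Sum>a<T. g w a) / (real (card W) * real T)"
    proof -
      have "svrg_expected_gm n gf h x0 T n 1 eta = (\<Sum>x\<in>W \<times> {0..<T}. (\<lambda>(w, a). g w a) x) / real (card (W \<times> {0..<T}))"
        unfolding svrg_expected_gm_def svrg_space_def steps W_def[symmetric] g_def
        by (rule integral_pmf_of_set) (use Wfin Wne T in auto)
      also have "\<dots> = (\<Sum>w\<in>W. \<Sum>a<T. g w a) / (real (card W) * real T)"
        by (simp add: sum.cartesian_product[symmetric] card_cartesian_product atLeast0LessThan)
      finally show ?thesis .
    qed
    have "(\<Sum>w\<in>W. \<Sum>a<T. g w a) \<le> (\<Sum>w\<in>W. 6 * L * real n * D)" by (rule sum_mono) (rule bound)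
    also have "\<dots> = real (card W) * (6 * L * real n * D)" by simp
    finally have S: "(\<Sum>w\<in>W. \<Sum>a<T. g w a) \<le> real (card W) * (6 * L * real n * D)" .
    have cW: "real (card W) > 0" using Wfin Wne by (simp add: card_gt_0_iff)
    have "svrg_expected_gm n gf h x0 T n 1 eta \<le> real (card W) * (6 * L * real n * D) / (real (card W) * real T)"
      unfolding E using S cW T by (intro divide_right_mono) auto
    also have "\<dots> = 6 * L * real n * D / real T" using cW by simp
    also have "\<dots> \<le> C * D"
    proof -
      have "6 * L * real n \<le> 18 * L * (real n)\<^sup>2 / (3 * real n - 2)"
        using n L by (simp add: field_simps power2_eq_square)
      then have "6 * L * real n * D \<le> 18 * L * (real n)\<^sup>2 / (3 * real n - 2) * D" using D0 by (intro mult_right_mono)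
      then have "6 * L * real n * D / real T \<le> 18 * L * (real n)\<^sup>2 / (3 * real n - 2) * D / real T"
        using T by (intro divide_right_mono) auto
      moreover have "C * D = 18 * L * (real n)\<^sup>2 / (3 * real n - 2) * D / real T" unfolding C_def by simp
      ultimately show ?thesis by simp
    qed
    finally have fin: "svrg_expected_gm n gf h x0 T n 1 eta \<le> C * D" .
    show ?thesis using fin real hs unfolding eta_def[symmetric] C_def[symmetric] Fs_def[symmetric] D_def by simp
  qed
qed

end
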